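(* Suppose $\Delta$ is full dimensional and convex. For any $\kappa\in(0,1]$ and $x\in\mathcal X$, $$\int_\Delta\exp\Big(\frac{g(x,\delta)}{\kappa}\Big)d\delta\ \ge\ \exp\Big(\frac{G(x)}{\kappa}\Big)\exp\big(-L_{g,\Delta}(R_\Delta+D_\Delta)\big)\frac{\pi^{d/2}}{\Gamma(d/2+1)}(\kappa R_\Delta)^d.$$
   Context: $\mathcal X\subset\mathbb R^n$ compact; $\Delta\subset\mathbb R^d$ compact; $g:\mathcal X\times\Delta\to\mathbb R$ with $\delta\mapsto g(x,\delta)$ $L_{g,\Delta}$-Lipschitz (Euclidean norm) for each $x$; $G(x):=\max_{\delta\in\Delta}g(x,\delta)$. $R_\Delta$ is the radius of the largest Euclidean ball contained in $\Delta$ (so $B_{R_\Delta}(\delta_0)\subseteq\Delta$ for some $\delta_0$), $D_\Delta:=\max_{\delta,\delta'\in\Delta}\|\delta-\delta'\|$, and $\Gamma$ is the gamma function. *)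

theory Defs
  imports "HOL-Analysis.Analysis"
begin

definition inradius :: "'a::euclidean_space set \<Rightarrow> real" where
  "inradius D = Sup {r. r \<ge> 0 \<and> (\<exists>c. cball c r \<subseteq> D)}"

definition worstcase :: "('b \<Rightarrow> 'a \<Rightarrow> real) \<Rightarrow> 'a set \<Rightarrow> 'b \<Rightarrow> real" where
  "worstcase g D x = Sup (g x ` D)"

end

theory Submission
  imports Defs
begin

lemma int_compact: "compact S \<Longrightarrow> continuous_on S f \<Longrightarrow> (f::'a::euclidean_space\<Rightarrow>real) integrable_on S"
proof -
  assume a: "compact S" "continuous_on S f"
  have "(\<lambda>x. indicator S x *\<^sub>R f x) integrable_on UNIV"
    by (rule integrable_on_lborel[OF borel_integrable_compact[OF a]])
  moreover have "(\<lambda>x. indicator S x *\<^sub>R f x) = (\<lambda>x. if x \<in> S then f x else 0)"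
    by (auto simp: indicator_def)
  ultimately show ?thesis using integrable_restrict_UNIV by metis
qed

lemma int_const_cball: "integral (cball (c::'a::euclidean_space) r) (\<lambda>x. k) = k * Henstock_Kurzweil_Integration.content (cball c r)"
proof -
  have "integral (cball c r) (\<lambda>x. k) = integral (cball c r) (\<lambda>x. k *\<^sub>R 1)" by simp
  also have "\<dots> = k * integral (cball c r) (\<lambda>x. 1)" by (subst integral_cmul) simp
  also have "integral (cball c r) (\<lambda>x. 1::real) = measure lebesgue (cball c r)"
    by (rule lmeasure_integral[symmetric]) simp
  also have "measure lebesgue (cball c r) = measure lborel (cball c r)"
    by (simp add: measure_completion)
  finally show ?thesis .
qed

theorem mainTheorem10:
  fixes X :: "'n::euclidean_space set"
    and \<Delta> :: "'d::euclidean_space set"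
    and g :: "'n \<Rightarrow> 'd \<Rightarrow> real"
    and L :: real and \<kappa> :: real and x :: 'n
  assumes "compact X" and "compact \<Delta>"
    and "convex \<Delta>" and "interior \<Delta> \<noteq> {}"
    and "\<And>y. y \<in> X \<Longrightarrow> L-lipschitz_on \<Delta> (g y)"
    and "0 < \<kappa>" and "\<kappa> \<le> 1"
    and "x \<in> X"
  shows "integral \<Delta> (\<lambda>\<delta>. exp (g x \<delta> / \<kappa>))
         \<ge> exp (worstcase g \<Delta> x / \<kappa>) * exp (- L * (inradius \<Delta> + diameter \<Delta>))
           * (pi powr (real DIM('d) / 2) / Gamma (real DIM('d) / 2 + 1))
           * (\<kappa> * inradius \<Delta>) ^ DIM('d)"
proof -
  note cpt = assms(2) and cvx = assms(3) and kp = assms(6) and k1 = assms(7)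
  have lip: "L-lipschitz_on \<Delta> (g x)" using assms(5,8) by blast
  have L0: "0 \<le> L" and Ld: "\<And>a b. a \<in> \<Delta> \<Longrightarrow> b \<in> \<Delta> \<Longrightarrow> dist (g x a) (g x b) \<le> L * dist a b"
    using lip unfolding lipschitz_on_def by auto
  have ne: "\<Delta> \<noteq> {}" using assms(4) interior_subset by blast
  have bnd: "bounded \<Delta>" using cpt compact_imp_bounded by blast
  have contg: "continuous_on \<Delta> (g x)" using lip lipschitz_on_continuous_on by blast
  obtain ds where ds: "ds \<in> \<Delta>" "\<And>y. y \<in> \<Delta> \<Longrightarrow> g x y \<le> g x ds"
    using continuous_attains_sup[OF cpt ne contg] by blast
  define G where "G = worstcase g \<Delta> x"
  have G: "G = g x ds" unfolding G_def worstcase_def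
    by (rule cSup_eq_maximum) (use ds in auto)
  define S where "S = {r. r \<ge> 0 \<and> (\<exists>c. cball c r \<subseteq> \<Delta>)}"
  define R where "R = inradius \<Delta>"
  define D where "D = diameter \<Delta>"
  have RS: "R = Sup S" unfolding R_def S_def inradius_def by simp
  have S_le: "r \<le> D" if "r \<in> S" for r
  proof -
    from that obtain c where r: "r \<ge> 0" "cball c r \<subseteq> \<Delta>" unfolding S_def by blast
    obtain b :: 'd where b: "b \<in> Basis" using nonempty_Basis by blast
    have "c \<in> \<Delta>" "c + r *\<^sub>R b \<in> \<Delta>" using r b by (auto simp: dist_norm)
    hence "dist c (c + r *\<^sub>R b) \<le> D" unfolding D_def using diameter_bounded_bound bnd by blast
    thus ?thesis using r b by (simp add: dist_norm)
  qed
  have bdd: "bdd_above S" using S_le by (auto simp: bdd_above_def)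
  obtain c0 where c0: "c0 \<in> \<Delta>" using ne by blast
  have S0: "0 \<in> S" unfolding S_def using c0 by (intro CollectI conjI exI[of _ c0]) auto
  have Sne: "S \<noteq> {}" using S0 by blast
  have R0: "0 \<le> R" unfolding RS using cSup_upper[OF S0 bdd] .
  define f where "f = (\<lambda>\<delta>. exp (g x \<delta> / \<kappa>))"
  define K where "K = pi powr (real DIM('d) / 2) / Gamma (real DIM('d) / 2 + 1)"
  define E where "E = exp (G / \<kappa>) * exp (- L * (R + D))"
  have K0: "0 \<le> K" unfolding K_def by (intro divide_nonneg_nonneg less_imp_le[OF Gamma_real_pos]) auto
  have E0: "0 \<le> E" unfolding E_def by simp
  have fint: "f integrable_on \<Delta>" unfolding f_def
    using kp by (intro int_compact cpt continuous_intros contg) auto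
  have key: "integral \<Delta> f \<ge> E * K * (\<kappa> * r) ^ DIM('d)" if r: "r \<in> S" for r
  proof -
    from r obtain c where r0: "r \<ge> 0" and cb: "cball c r \<subseteq> \<Delta>" unfolding S_def by blast
    have rR: "r \<le> R" unfolding RS using cSup_upper[OF r bdd] .
    have cD: "c \<in> \<Delta>" using cb r0 by auto
    have dcd: "dist c ds \<le> D" unfolding D_def using diameter_bounded_bound bnd cD ds(1) by blast
    define c' where "c' = ds + \<kappa> *\<^sub>R (c - ds)"
    define B where "B = cball c' (\<kappa> * r)"
    have BD: "B \<subseteq> \<Delta>"
    proof
      fix y assume y: "y \<in> B"
      define e where "e = ds + (1 / \<kappa>) *\<^sub>R (y - ds)"
      have "e - c = (1/\<kappa>) *\<^sub>R (y - c')" unfolding e_def c'_def using kp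
        by (simp add: algebra_simps)
      hence "dist e c = dist y c' / \<kappa>" using kp by (simp add: dist_norm)
      also have "\<dots> \<le> r" using y kp unfolding B_def by (simp add: dist_commute divide_le_eq mult.commute)
      finally have "e \<in> \<Delta>" using cb by (auto simp: dist_commute)
      hence "(1 - \<kappa>) *\<^sub>R ds + \<kappa> *\<^sub>R e \<in> \<Delta>"
        using convexD[OF cvx ds(1)] kp k1 by simp
      moreover have "(1 - \<kappa>) *\<^sub>R ds + \<kappa> *\<^sub>R e = y" unfolding e_def using kp
        by (simp add: algebra_simps)
      ultimately show "y \<in> \<Delta>" by simp
    qed
    have lowb: "exp (G / \<kappa>) * exp (- L * (R + D)) \<le> f y" if y: "y \<in> B" for y
    proof -
      have yD: "y \<in> \<Delta>" using y BD by blast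
      have "dist y ds \<le> dist y c' + dist c' ds" by (rule dist_triangle)
      also have "dist c' ds = \<kappa> * dist c ds" unfolding c'_def using kp by (simp add: dist_norm)
      also have "dist y c' \<le> \<kappa> * r" using y unfolding B_def by (simp add: dist_commute)
      finally have d1: "dist y ds \<le> \<kappa> * (R + D)" using kp rR dcd
        by (smt (verit, ccfv_SIG) mult_left_mono distrib_left)
      have "g x ds - g x y \<le> L * dist y ds" using Ld[OF yD ds(1)] by (simp add: dist_real_def)
      also have "\<dots> \<le> L * (\<kappa> * (R + D))" by (rule mult_left_mono[OF d1 L0])
      finally have "G - L * (\<kappa> * (R + D)) \<le> g x y" using G by simp
      hence "(G - L * (\<kappa> * (R + D))) / \<kappa> \<le> g x y / \<kappa>" using kp by (simp add: divide_right_mono)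
      moreover have "(G - L * (\<kappa> * (R + D))) / \<kappa> = G / \<kappa> + (- L * (R + D))" using kp
        by (simp add: field_simps)
      ultimately have "exp (G / \<kappa> + (- L * (R + D))) \<le> exp (g x y / \<kappa>)" by simp
      thus ?thesis unfolding f_def by (simp only: exp_add)
    qed
    have Bint: "f integrable_on B" unfolding B_def f_def
      using kp continuous_on_subset[OF contg BD[unfolded B_def]]
      by (intro int_compact compact_cball continuous_intros) auto
    have "E * K * (\<kappa> * r) ^ DIM('d) = integral B (\<lambda>_. E)"
      unfolding B_def int_const_cball content_cball[OF mult_nonneg_nonneg[OF less_imp_le[OF kp] r0]]
      unfolding unit_ball_vol_def K_def by simp
    also have "\<dots> \<le> integral B f"
      using lowb Bint unfolding E_def
      by (intro integral_le integrable_on_const) (auto simp: B_def)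
    also have "\<dots> \<le> integral \<Delta> f"
      by (rule integral_subset_le[OF BD Bint fint]) (auto simp: f_def)
    finally show ?thesis .
  qed
  have goal: "integral \<Delta> f \<ge> E * K * (\<kappa> * R) ^ DIM('d)"
  proof (cases "R = 0")
    case True thus ?thesis using key[OF S0] by simp
  next
    case False
    hence Rp: "R > 0" using R0 by simp
    have H: "integral \<Delta> f \<ge> E * K * (\<kappa> * t) ^ DIM('d)" if t: "0 \<le> t" "t < R" for t
    proof -
      obtain r where r: "r \<in> S" "t < r" using less_cSupD[OF Sne] t RS by blast
      have "E * K * (\<kappa> * t) ^ DIM('d) \<le> E * K * (\<kappa> * r) ^ DIM('d)"
        using t r kp E0 K0 by (intro mult_left_mono power_mono mult_nonneg_nonneg) auto
      thus ?thesis using key[OF r(1)] by linarith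
    qed
    define tn where "tn = (\<lambda>n::nat. R - R / (real n + 1))"
    have "(\<lambda>n. R / (real n + 1)) \<longlonglongrightarrow> 0"
      using LIMSEQ_Suc[OF lim_const_over_n[of R]] by (simp add: add.commute)
    hence tl: "tn \<longlonglongrightarrow> R" unfolding tn_def using tendsto_diff[of "\<lambda>_. R" R] by force
    have "(\<lambda>n. E * K * (\<kappa> * tn n) ^ DIM('d)) \<longlonglongrightarrow> E * K * (\<kappa> * R) ^ DIM('d)"
      by (intro tendsto_intros tl)
    moreover have "E * K * (\<kappa> * tn n) ^ DIM('d) \<le> integral \<Delta> f" for n
    proof (rule H)
      have "R / (real n + 1) \<le> R" using Rp by (simp add: divide_le_eq)
      thus "0 \<le> tn n" unfolding tn_def by simp
      show "tn n < R" unfolding tn_def using Rp by simp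
    qed
    ultimately show ?thesis by (intro LIMSEQ_le_const2) auto
  qed
  thus ?thesis unfolding f_def E_def K_def G_def R_def D_def by simp
qed

end
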